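(* Let $S$ be an $E$-demigroup. If the constellation $C^d_E(S)$ is inductive, then $E$ is right pre-reduced and: (I1) for all $t\in S$ and $e\in E$ there is $t\cdot e\in E$ such that for all $s\in S$: ($ste=st$ and $sd(t)=s$) if and only if $s(t\cdot e)=s$; and (I2) $(E,\le_r)$ is a meet-semilattice, and for all $s\in S$ and $e,f\in E$, $se=sf=s$ implies $s(e\wedge f)=s$, where $\wedge$ is the meet in $(E,\le_r)$. That is, $S$ is an inductive $E$-demigroup.
   Context: For a semigroup $S$, $E(S)$ is its set of idempotents; for $e,f\in E(S)$, $e\le_r f$ iff $e=ef$. $E\subseteq E(S)$ is right pre-reduced if $e=ef$ and $f=fe$ imply $e=f$ for $e,f\in E$. A demigroup is a semigroup $S$ with a unary operation $d$ such that for all $x,y\in S$: $d(x)\in E(S)$, $d(x)x=x$ and $d(xy)=d(xd(y))$. For $E\subseteq E(S)$, $S$ is an $E$-demigroup if $d(s)\in E$ for all $s\in S$ and $ed(e)=e$ for all $e\in E$. An $E$-demigroup is inductive if $E$ is right pre-reduced and there is a function $\cdot:S\times E\to E$ satisfying (I1) and (I2). $C_E(S)=\{(e,s)\in E\times S\mid es=s\}$ with partial product $(e,s)\circ(f,t)=(e,st)$ defined exactly when $sf=s$, and $D((e,s))=(e,e)$; $C^d_E(S)=\{(e,s)\in C_E(S)\mid d(e)=d(s)\}$ with the restricted operations. This is a constellation: a set $P$ with partial binary $\circ$ and unary $D$ such that (C1) if $x\circ(y\circ z)$ exists then so does $(x\circ y)\circ z$ and they are equal; (C2) if $x\circ y$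 and $y\circ z$ exist then $x\circ(y\circ z)$ exists; (C3) $D(x)$ is the unique right identity $e$ (i.e. $a\circ e=a$ whenever defined) with $e\circ x=x$. The natural quasiorder on $P$: $s\le t$ iff $D(s)\circ t$ exists and equals $s$; $P$ is normal if this is a partial order. $P$ is inductive if it is normal and (O4) for all $e\in D(P)=\{D(x)\mid x\in P\}$ and $a\in P$ there is a largest $x\in P$ (in the natural order) with $x\le a$ and $x\circ e$ defined, denoted $a|e$; and (O5) for $x,y\in P$, $e\in D(P)$, if $x\circ y$ exists then $D((x\circ y)|e)=D(x|D(y|e))$. *)

theory Defs
  imports Main
begin

text \<open>The semigroup S is the whole carrier type 'a of class semigroup_mult.\<close>

definition idem :: "'a::semigroup_mult \<Rightarrow> bool" where
  "idem x \<longleftrightarrow> x * x = x"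

definition demigroup :: "('a::semigroup_mult \<Rightarrow> 'a) \<Rightarrow> bool" where
  "demigroup d \<longleftrightarrow> (\<forall>x y. idem (d x) \<and> d x * x = x \<and> d (x * y) = d (x * d y))"

definition E_demigroup :: "('a::semigroup_mult \<Rightarrow> 'a) \<Rightarrow> 'a set \<Rightarrow> bool" where
  "E_demigroup d E \<longleftrightarrow> demigroup d \<and> E \<subseteq> {e. idem e}
     \<and> (\<forall>s. d s \<in> E) \<and> (\<forall>e\<in>E. e * d e = e)"

definition right_pre_reduced :: "'a::semigroup_mult set \<Rightarrow> bool" where
  "right_pre_reduced E \<longleftrightarrow> (\<forall>e\<in>E. \<forall>f\<in>E. e = e * f \<and> f = f * e \<longrightarrow> e = f)"

definition leq_r :: "'a::semigroup_mult \<Rightarrow> 'a \<Rightarrow> bool" where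
  "leq_r e f \<longleftrightarrow> e = e * f"

definition cond_I1 :: "('a::semigroup_mult \<Rightarrow> 'a) \<Rightarrow> 'a set \<Rightarrow> ('a \<Rightarrow> 'a \<Rightarrow> 'a) \<Rightarrow> bool" where
  "cond_I1 d E dot \<longleftrightarrow> (\<forall>t e. e \<in> E \<longrightarrow> dot t e \<in> E \<and>
     (\<forall>s. (s * t * e = s * t \<and> s * d t = s) \<longleftrightarrow> s * dot t e = s))"

definition is_meet_r :: "'a::semigroup_mult set \<Rightarrow> 'a \<Rightarrow> 'a \<Rightarrow> 'a \<Rightarrow> bool" where
  "is_meet_r E e f m \<longleftrightarrow> m \<in> E \<and> leq_r m e \<and> leq_r m f
     \<and> (\<forall>g\<in>E. leq_r g e \<and> leq_r g f \<longrightarrow> leq_r g m)"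

definition meet_semilattice_r :: "'a::semigroup_mult set \<Rightarrow> bool" where
  "meet_semilattice_r E \<longleftrightarrow>
     (\<forall>e\<in>E. leq_r e e)
   \<and> (\<forall>e\<in>E. \<forall>f\<in>E. \<forall>g\<in>E. leq_r e f \<and> leq_r f g \<longrightarrow> leq_r e g)
   \<and> (\<forall>e\<in>E. \<forall>f\<in>E. leq_r e f \<and> leq_r f e \<longrightarrow> e = f)
   \<and> (\<forall>e\<in>E. \<forall>f\<in>E. \<exists>m. is_meet_r E e f m)"

definition cond_I2 :: "'a::semigroup_mult set \<Rightarrow> bool" where
  "cond_I2 E \<longleftrightarrow> meet_semilattice_r E \<and>
     (\<forall>s e f m. e \<in> E \<and> f \<in> E \<and> is_meet_r E e f m \<and> s * e = s \<and> s * f = s \<longrightarrow> s * m = s)"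

definition nat_le :: "'p set \<Rightarrow> ('p \<Rightarrow> 'p \<Rightarrow> 'p option) \<Rightarrow> ('p \<Rightarrow> 'p) \<Rightarrow> 'p \<Rightarrow> 'p \<Rightarrow> bool" where
  "nat_le P cmp D s t \<longleftrightarrow> cmp (D s) t = Some s"

definition normal_constellation :: "'p set \<Rightarrow> ('p \<Rightarrow> 'p \<Rightarrow> 'p option) \<Rightarrow> ('p \<Rightarrow> 'p) \<Rightarrow> bool" where
  "normal_constellation P cmp D \<longleftrightarrow>
     (\<forall>x\<in>P. nat_le P cmp D x x)
   \<and> (\<forall>x\<in>P. \<forall>y\<in>P. \<forall>z\<in>P. nat_le P cmp D x y \<and> nat_le P cmp D y z \<longrightarrow> nat_le P cmp D x z)
   \<and> (\<forall>x\<in>P. \<forall>y\<in>P. nat_le P cmp D x y \<and> nat_le P cmp D y x \<longrightarrow> x = y)"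

definition is_restr :: "'p set \<Rightarrow> ('p \<Rightarrow> 'p \<Rightarrow> 'p option) \<Rightarrow> ('p \<Rightarrow> 'p) \<Rightarrow> 'p \<Rightarrow> 'p \<Rightarrow> 'p \<Rightarrow> bool" where
  "is_restr P cmp D a e x \<longleftrightarrow> x \<in> P \<and> nat_le P cmp D x a \<and> cmp x e \<noteq> None
     \<and> (\<forall>y\<in>P. nat_le P cmp D y a \<and> cmp y e \<noteq> None \<longrightarrow> nat_le P cmp D y x)"

definition restr :: "'p set \<Rightarrow> ('p \<Rightarrow> 'p \<Rightarrow> 'p option) \<Rightarrow> ('p \<Rightarrow> 'p) \<Rightarrow> 'p \<Rightarrow> 'p \<Rightarrow> 'p" where
  "restr P cmp D a e = (THE x. is_restr P cmp D a e x)"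

definition inductive_constellation :: "'p set \<Rightarrow> ('p \<Rightarrow> 'p \<Rightarrow> 'p option) \<Rightarrow> ('p \<Rightarrow> 'p) \<Rightarrow> bool" where
  "inductive_constellation P cmp D \<longleftrightarrow> normal_constellation P cmp D
   \<and> (\<forall>e\<in>D ` P. \<forall>a\<in>P. \<exists>x. is_restr P cmp D a e x)
   \<and> (\<forall>x\<in>P. \<forall>y\<in>P. \<forall>e\<in>D ` P. \<forall>xy. cmp x y = Some xy \<longrightarrow>
        D (restr P cmp D xy e) = D (restr P cmp D x (D (restr P cmp D y e))))"

definition CdE :: "('a::semigroup_mult \<Rightarrow> 'a) \<Rightarrow> 'a set \<Rightarrow> ('a \<times> 'a) set" where
  "CdE d E = {(e, s). e \<in> E \<and> e * s = s \<and> d e = d s}"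

definition C_comp :: "('a::semigroup_mult \<times> 'a) \<Rightarrow> ('a \<times> 'a) \<Rightarrow> ('a \<times> 'a) option" where
  "C_comp x y = (case x of (e, s) \<Rightarrow> case y of (f, t) \<Rightarrow>
       if s * f = s then Some (e, s * t) else None)"

definition C_D :: "('a::semigroup_mult \<times> 'a) \<Rightarrow> ('a \<times> 'a)" where
  "C_D x = (fst x, fst x)"

end

theory Submission
  imports Defs
begin

lemma restr_is:
  assumes ic: "inductive_constellation P cmp D" and a: "a \<in> P" and e: "e \<in> D ` P"
  shows "is_restr P cmp D a e (restr P cmp D a e)"
proof -
  have nc: "normal_constellation P cmp D" using ic by (simp add: inductive_constellation_def)
  have "\<forall>e\<in>D ` P. \<forall>a\<in>P. \<exists>x. is_restr P cmp D a e x" using ic unfolding inductive_constellation_def by (rule conjunct1[OF conjunct2])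
  then obtain x where x: "is_restr P cmp D a e x" using a e by blast
  have "\<And>y. is_restr P cmp D a e y \<Longrightarrow> y = x"
  proof -
    fix y assume y: "is_restr P cmp D a e y"
    have "nat_le P cmp D y x" using x y by (auto simp: is_restr_def)
    moreover have "nat_le P cmp D x y" using x y by (auto simp: is_restr_def)
    moreover have "x \<in> P" "y \<in> P" using x y unfolding is_restr_def by blast+
    ultimately show "y = x" using nc unfolding normal_constellation_def by blast
  qed
  hence "\<exists>!x. is_restr P cmp D a e x" using x by blast
  thus ?thesis unfolding restr_def by (rule theI')
qed

lemma restr_self:
  assumes ic: "inductive_constellation P cmp D" and a: "a \<in> P" and e: "e \<in> D ` P"
    and c: "cmp a e \<noteq> None"
  shows "restr P cmp D a e = a"
proof -
  have nc: "normal_constellation P cmp D" using ic by (simp add: inductive_constellation_def)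
  note r = restr_is[OF ic a e]
  have "nat_le P cmp D a a" using nc a by (simp add: normal_constellation_def)
  hence "nat_le P cmp D a (restr P cmp D a e)" using r a c by (simp add: is_restr_def)
  moreover have "nat_le P cmp D (restr P cmp D a e) a" using r by (simp add: is_restr_def)
  moreover have "restr P cmp D a e \<in> P" using r unfolding is_restr_def by blast
  ultimately show ?thesis using nc a unfolding normal_constellation_def by blast
qed

lemma dd: "demigroup d \<Longrightarrow> d (d x) = d x"
proof -
  assume dm: "demigroup d"
  have "d x = d (d x * x)" using dm by (simp add: demigroup_def)
  also have "\<dots> = d (d x * d x)" using dm by (metis demigroup_def)
  also have "\<dots> = d (d x)" using dm by (simp add: demigroup_def idem_def)
  finally show ?thesis by simp
qed

lemma memP: "(e, s) \<in> CdE d E \<longleftrightarrow> e \<in> E \<and> e * s = s \<and> d e = d s"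
  by (simp add: CdE_def)

lemma natle: "nat_le P C_comp C_D (e, s) (f, t) \<longleftrightarrow> e * f = e \<and> s = e * t"
  by (auto simp: nat_le_def C_comp_def C_D_def)

lemma cmpN: "C_comp (e, s) (f, t) \<noteq> None \<longleftrightarrow> s * f = s"
  by (simp add: C_comp_def)

lemma cmpS: "s * f = s \<Longrightarrow> C_comp (e, s) (f, t) = Some (e, s * t)"
  by (simp add: C_comp_def)

lemma DP: "E_demigroup d E \<Longrightarrow> e \<in> E \<Longrightarrow> (e, e) \<in> C_D ` CdE d E"
  unfolding E_demigroup_def idem_def C_D_def
  by (rule image_eqI[where x="(e,e)"]) (auto simp: CdE_def)

lemma eP: "E_demigroup d E \<Longrightarrow> e \<in> E \<Longrightarrow> (e, e) \<in> CdE d E"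
  unfolding E_demigroup_def idem_def by (auto simp: CdE_def)

lemma dsP: "E_demigroup d E \<Longrightarrow> (d s, s) \<in> CdE d E"
  unfolding E_demigroup_def by (auto simp: CdE_def demigroup_def dd)

lemma restr_fst:
  assumes ic: "inductive_constellation (CdE d E) C_comp C_D" and ed: "E_demigroup d E"
    and g: "g \<in> E"
    and h: "C_D (restr (CdE d E) C_comp C_D (d s, s) (g, g)) = (d s, d s)"
  shows "s * g = s"
proof -
  let ?P = "CdE d E"
  have r: "is_restr ?P C_comp C_D (d s, s) (g, g) (restr ?P C_comp C_D (d s, s) (g, g))"
    by (rule restr_is[OF ic dsP[OF ed] DP[OF ed g]])
  obtain u w where uw: "restr ?P C_comp C_D (d s, s) (g, g) = (u, w)" by (cases "restr ?P C_comp C_D (d s, s) (g, g)")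
  have "u = d s" using h uw by (simp add: C_D_def)
  moreover have nl: "nat_le ?P C_comp C_D (u, w) (d s, s)" and cc: "C_comp (u, w) (g, g) \<noteq> None"
    using r unfolding uw is_restr_def by blast+
  have "w = u * s" using natle[THEN iffD1, OF nl] by blast
  moreover have "w * g = w" using cmpN[THEN iffD1, OF cc] .
  moreover have "d s * s = s" using ed by (simp add: E_demigroup_def demigroup_def)
  ultimately show ?thesis by simp
qed

lemma O5:
  assumes ic: "inductive_constellation P cmp D" "x \<in> P" "y \<in> P" "e \<in> D ` P" "cmp x y = Some xy"
  shows "D (restr P cmp D xy e) = D (restr P cmp D x (D (restr P cmp D y e)))"
  using assms unfolding inductive_constellation_def by blast

theorem proposition3p5:
  fixes d :: "'a::semigroup_mult \<Rightarrow> 'a" and E :: "'a set"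
  assumes "E_demigroup d E"
    and "inductive_constellation (CdE d E) C_comp C_D"
  shows "right_pre_reduced E \<and> (\<exists>dot. cond_I1 d E dot) \<and> cond_I2 E"
proof -
  note ed = assms(1) and ic = assms(2)
  let ?P = "CdE d E"
  let ?r = "restr ?P C_comp C_D"
  have nc: "normal_constellation ?P C_comp C_D" using ic by (simp add: inductive_constellation_def)
  have idm: "\<And>e. e \<in> E \<Longrightarrow> e * e = e" using ed by (auto simp: E_demigroup_def idem_def)
  have dm: "demigroup d" using ed by (simp add: E_demigroup_def)
  have dsx: "\<And>x. d x * x = x" using dm by (simp add: demigroup_def)
  have dE: "\<And>x. d x \<in> E" using ed by (simp add: E_demigroup_def)
  have rpr: "right_pre_reduced E"
    unfolding right_pre_reduced_def
  proof (intro ballI impI)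
    fix e f assume e: "e \<in> E" and f: "f \<in> E" and h: "e = e * f \<and> f = f * e"
    have "nat_le ?P C_comp C_D (e, e) (f, f)" "nat_le ?P C_comp C_D (f, f) (e, e)"
      using h by (auto simp: natle)
    hence "(e, e) = (f, f)" using nc eP[OF ed e] eP[OF ed f] unfolding normal_constellation_def by blast
    thus "e = f" by simp
  qed
  define dot where "dot t e = fst (?r (d t, t) (e, e))" for t e
  have I1: "cond_I1 d E dot"
    unfolding cond_I1_def
  proof (intro allI impI conjI)
    fix t e assume e: "e \<in> E"
    have r: "is_restr ?P C_comp C_D (d t, t) (e, e) (?r (d t, t) (e, e))"
      by (rule restr_is[OF ic dsP[OF ed] DP[OF ed e]])
    obtain f u where fu: "?r (d t, t) (e, e) = (f, u)" by (cases "?r (d t, t) (e, e)")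
    have fP: "(f, u) \<in> ?P" and nl: "nat_le ?P C_comp C_D (f, u) (d t, t)" and cc: "C_comp (f, u) (e, e) \<noteq> None"
      using r unfolding fu is_restr_def by blast+
    have f1: "f * d t = f" and f2: "u = f * t" using natle[THEN iffD1, OF nl] by blast+
    have f3: "u * e = u" using cmpN[THEN iffD1, OF cc] .
    have dot: "dot t e = f" using fu by (simp add: dot_def)
    show "dot t e \<in> E" using fP dot by (simp add: memP)
    fix s
    show "(s * t * e = s * t \<and> s * d t = s) \<longleftrightarrow> s * dot t e = s"
    proof
      assume "s * dot t e = s"
      hence sf: "s * f = s" using dot by simp
      have "s * d t = s * f * d t" using sf by simp
      also have "\<dots> = s * (f * d t)" by (simp add: mult.assoc)
      also have "\<dots> = s" using f1 sf by simp
      finally have "s * d t = s" .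
      moreover have "s * t * e = s * f * t * e" using sf by simp
      moreover have "s * f * t * e = s * (f * t * e)" by (simp add: mult.assoc)
      moreover have "f * t * e = f * t" using f2 f3 by simp
      moreover have "s * (f * t) = s * f * t" by (simp add: mult.assoc)
      ultimately show "s * t * e = s * t \<and> s * d t = s" using sf by (simp add: mult.assoc)
    next
      assume h: "s * t * e = s * t \<and> s * d t = s"
      have c: "C_comp (d s, s) (d t, t) = Some (d s, s * t)" using h by (simp add: cmpS)
      have "d (s * t) = d (s * d t)" using dm unfolding demigroup_def by blast
      hence "d (s * t) = d s" using h by simp
      moreover have "d s * (s * t) = s * t" using dsx by (simp add: mult.assoc[symmetric])
      moreover have "d (d s) = d s" using dm by (rule dd)
      ultimately have st: "(d s, s * t) \<in> ?P" using dE by (simp add: memP)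
      have "?r (d s, s * t) (e, e) = (d s, s * t)"
        by (rule restr_self[OF ic st DP[OF ed e]]) (rule cmpN[THEN iffD2], use h in simp)
      hence "C_D (?r (d s, s) (C_D (?r (d t, t) (e, e)))) = (d s, d s)"
        using O5[OF ic dsP[OF ed] dsP[OF ed] DP[OF ed e] c] by (simp add: C_D_def)
      hence "C_D (?r (d s, s) (f, f)) = (d s, d s)" using fu by (simp add: C_D_def)
      hence "s * f = s" by (rule restr_fst[OF ic ed, rotated]) (use fP in \<open>simp add: memP\<close>)
      thus "s * dot t e = s" using dot by simp
    qed
  qed
  have meet: "\<And>e f. e \<in> E \<Longrightarrow> f \<in> E \<Longrightarrow> is_meet_r E e f (fst (?r (e, e) (f, f)))
       \<and> (\<forall>s. s * e = s \<and> s * f = s \<longrightarrow> s * fst (?r (e, e) (f, f)) = s)"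
  proof -
    fix e f assume e: "e \<in> E" and f: "f \<in> E"
    have r: "is_restr ?P C_comp C_D (e, e) (f, f) (?r (e, e) (f, f))"
      by (rule restr_is[OF ic eP[OF ed e] DP[OF ed f]])
    obtain g u where gu: "?r (e, e) (f, f) = (g, u)" by (cases "?r (e, e) (f, f)")
    have gP: "(g, u) \<in> ?P" and nl: "nat_le ?P C_comp C_D (g, u) (e, e)" and cc: "C_comp (g, u) (f, f) \<noteq> None"
      using r unfolding gu is_restr_def by blast+
    have g1: "g * e = g" and g2: "u = g * e" using natle[THEN iffD1, OF nl] by blast+
    have g3: "u * f = u" using cmpN[THEN iffD1, OF cc] .
    have gE: "g \<in> E" using gP by (simp add: memP)
    have ug: "u = g" using g1 g2 by simp
    have "is_meet_r E e f g"
      unfolding is_meet_r_def leq_r_def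
    proof (intro conjI ballI impI)
      show "g \<in> E" by (rule gE)
      show "g = g * e" using g1 by simp
      show "g = g * f" using g3 ug by simp
      fix h assume hE: "h \<in> E" and hh: "h = h * e \<and> h = h * f"
      have "(h, h) \<in> ?P" by (rule eP[OF ed hE])
      moreover have "nat_le ?P C_comp C_D (h, h) (e, e)" using hh by (simp add: natle)
      moreover have "C_comp (h, h) (f, f) \<noteq> None" by (rule cmpN[THEN iffD2], use hh in simp)
      ultimately have "nat_le ?P C_comp C_D (h, h) (g, u)" using r unfolding gu is_restr_def by blast
      thus "h = h * g" by (simp add: natle)
    qed
    moreover have "\<forall>s. s * e = s \<and> s * f = s \<longrightarrow> s * g = s"
    proof (intro allI impI)
      fix s assume h: "s * e = s \<and> s * f = s"
      have c: "C_comp (d s, s) (e, e) = Some (d s, s)" using h by (simp add: cmpS)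
      have "?r (d s, s) (f, f) = (d s, s)"
        by (rule restr_self[OF ic dsP[OF ed] DP[OF ed f]]) (rule cmpN[THEN iffD2], use h in simp)
      hence "C_D (?r (d s, s) (C_D (?r (e, e) (f, f)))) = (d s, d s)"
        using O5[OF ic dsP[OF ed] eP[OF ed e] DP[OF ed f] c] by (simp add: C_D_def)
      hence "C_D (?r (d s, s) (g, g)) = (d s, d s)" using gu by (simp add: C_D_def)
      thus "s * g = s" by (rule restr_fst[OF ic ed gE])
    qed
    ultimately show "is_meet_r E e f (fst (?r (e, e) (f, f)))
       \<and> (\<forall>s. s * e = s \<and> s * f = s \<longrightarrow> s * fst (?r (e, e) (f, f)) = s)" using gu by simp
  qed
  have uniq: "\<And>e f m m'. is_meet_r E e f m \<Longrightarrow> is_meet_r E e f m' \<Longrightarrow> m = m'"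
  proof -
    fix e f m m' assume a: "is_meet_r E e f m" "is_meet_r E e f m'"
    hence "m \<in> E" "m' \<in> E" "leq_r m m'" "leq_r m' m" unfolding is_meet_r_def by blast+
    thus "m = m'" using rpr unfolding right_pre_reduced_def leq_r_def by blast
  qed
  have I2: "cond_I2 E"
    unfolding cond_I2_def meet_semilattice_r_def
  proof (intro conjI ballI impI allI)
    fix e assume "e \<in> E" thus "leq_r e e" using idm by (simp add: leq_r_def)
  next
    fix e f g assume "e \<in> E" "f \<in> E" "g \<in> E" "leq_r e f \<and> leq_r f g"
    hence "e = e * f" "f = f * g" unfolding leq_r_def by blast+
    hence "e * g = e * f * g" by simp
    also have "\<dots> = e * f" using \<open>f = f * g\<close> by (simp add: mult.assoc)
    finally show "leq_r e g" unfolding leq_r_def using \<open>e = e * f\<close> by simp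
  next
    fix e f assume "e \<in> E" "f \<in> E" "leq_r e f \<and> leq_r f e"
    thus "e = f" using rpr unfolding right_pre_reduced_def leq_r_def by blast
  next
    fix e f assume "e \<in> E" "f \<in> E"
    thus "\<exists>m. is_meet_r E e f m" using meet by blast
  next
    fix s e f m assume h: "e \<in> E \<and> f \<in> E \<and> is_meet_r E e f m \<and> s * e = s \<and> s * f = s"
    hence "m = fst (?r (e, e) (f, f))" using meet uniq by blast
    thus "s * m = s" using meet h by blast
  qed
  show ?thesis using rpr I1 I2 by blast
qed

end
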